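(* Let $S=\langle n_1,n_2,n_3,n_4\rangle$ be a pseudo-symmetric numerical semigroup with embedding dimension $4$, with generators labeled so that the (unique) RF-matrix of $F(S)/2$ is $$\mathrm{RF}(F(S)/2)=\begin{pmatrix} -1 & \alpha_2-1 & 0 & 0\\ 0 & -1 & \alpha_3-1 & 0\\ \alpha_1-1 & 0 & -1 & \alpha_4-1\\ \alpha_1-1 & a & 0 & -1\end{pmatrix}$$ for some non-negative integer $a$ (such a labeling always exists). Then every $n_i$ is odd if and only if one of the following holds: 1) $F(S)/2$ is odd and every row of $\mathrm{RF}(F(S)/2)$ is odd; 2) $F(S)/2$ is even and every row of $\mathrm{RF}(F(S)/2)$ is even.
   Context: $F(S)=\max(\mathbb{Z}\setminus S)$. A pseudo-Frobenius number of $S$ is an integer $f\notin S$ with $f+s\in S$ for all $s\in S\setminus\{0\}$; $S$ is pseudo-symmetric if its set of pseudo-Frobenius numbers is $\{F(S)/2,F(S)\}$. For $S$ minimally generated by $n_1,\dots,n_4$, $\alpha_i$ is the least positive integer such that $\alpha_in_i$ is a non-negative integer combination of the $n_j$, $j\ne i$. For a pseudo-Frobenius number $f$, an RF-matrix of $f$ is a $4\times4$ integer matrix $(a_{ij})$ with $a_{ii}=-1$, $a_{ij}\geq 0$ for $i\neq j$, and $f=\sum_{j=1}^4 a_{ij}n_j$ for every $i$. The $i$-th row is called even (resp. odd) if $\sum_{j=1}^4 a_{ij}$ is even (resp. odd). *)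

theory Defs
  imports Main
begin

text \<open>Generators n 1, ..., n 4 are given by a function n :: nat => int on the index set {1..4};
4x4 matrices are functions nat => nat => int on {1..4} x {1..4}.\<close>

definition numerical_semigroup :: "int set \<Rightarrow> bool" where
  "numerical_semigroup S \<longleftrightarrow> S \<subseteq> {0..} \<and> 0 \<in> S \<and> (\<forall>a\<in>S. \<forall>b\<in>S. a + b \<in> S)
     \<and> finite ({0..} - S)"

definition lin_comb :: "(nat \<Rightarrow> int) \<Rightarrow> nat set \<Rightarrow> int \<Rightarrow> bool" where
  "lin_comb n I x \<longleftrightarrow> (\<exists>c :: nat \<Rightarrow> nat. x = (\<Sum>j\<in>I. int (c j) * n j))"

definition minimally_generated_by4 :: "int set \<Rightarrow> (nat \<Rightarrow> int) \<Rightarrow> bool" where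
  "minimally_generated_by4 S n \<longleftrightarrow>
     S = {x. lin_comb n {1..4} x} \<and>
     (\<forall>i\<in>{1..4::nat}. \<not> lin_comb n ({1..4} - {i}) (n i))"

definition alpha :: "(nat \<Rightarrow> int) \<Rightarrow> nat \<Rightarrow> nat" where
  "alpha n i = (LEAST k::nat. k > 0 \<and> lin_comb n ({1..4} - {i}) (int k * n i))"

definition frob :: "int set \<Rightarrow> int" where
  "frob S = (GREATEST x::int. x \<notin> S)"

definition pseudo_frobenius :: "int set \<Rightarrow> int \<Rightarrow> bool" where
  "pseudo_frobenius S f \<longleftrightarrow> f \<notin> S \<and> (\<forall>s\<in>S - {0}. f + s \<in> S)"

definition pseudo_symmetric :: "int set \<Rightarrow> bool" where
  "pseudo_symmetric S \<longleftrightarrow> even (frob S) \<and>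
     {f. pseudo_frobenius S f} = {frob S div 2, frob S}"

definition RF_matrix :: "(nat \<Rightarrow> int) \<Rightarrow> int \<Rightarrow> (nat \<Rightarrow> nat \<Rightarrow> int) \<Rightarrow> bool" where
  "RF_matrix n f A \<longleftrightarrow>
     (\<forall>i\<in>{1..4::nat}. A i i = -1) \<and>
     (\<forall>i\<in>{1..4::nat}. \<forall>j\<in>{1..4::nat}. i \<noteq> j \<longrightarrow> A i j \<ge> 0) \<and>
     (\<forall>i\<in>{1..4::nat}. f = (\<Sum>j=1..4. A i j * n j))"

definition row_sum :: "(nat \<Rightarrow> nat \<Rightarrow> int) \<Rightarrow> nat \<Rightarrow> int" where
  "row_sum A i = (\<Sum>j=1..4. A i j)"

definition special_RF :: "(nat \<Rightarrow> int) \<Rightarrow> int \<Rightarrow> nat \<Rightarrow> nat \<Rightarrow> int" where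
  "special_RF n a i j =
    (let a1 = int (alpha n 1) - 1; a2 = int (alpha n 2) - 1;
         a3 = int (alpha n 3) - 1; a4 = int (alpha n 4) - 1
     in [[-1, a2, 0, 0], [0, -1, a3, 0], [a1, 0, -1, a4], [a1, a, 0, -1]] ! (i - 1) ! (j - 1))"

end

theory Submission
  imports Defs
begin

lemma sum14: "(\<Sum>j=1..4::nat. g j) = g 1 + g 2 + g 3 + (g 4::int)"
  by (simp add: sum.atLeast_Suc_atMost numeral_eq_Suc)

lemma some_odd:
  assumes "numerical_semigroup S" "minimally_generated_by4 S n"
  shows "\<exists>i\<in>{1..4::nat}. odd (n i)"
proof (rule ccontr)
  assume H: "\<not> ?thesis"
  have ev: "\<forall>x\<in>S. even x"
  proof
    fix x assume "x \<in> S"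
    then obtain c where "x = (\<Sum>j\<in>{1..4}. int (c j) * n j)"
      using assms(2) unfolding minimally_generated_by4_def lin_comb_def by auto
    moreover have "even (\<Sum>j\<in>{1..4::nat}. int (c j) * n j)"
      using H by (intro dvd_sum) auto
    ultimately show "even x" by simp
  qed
  have sub: "(\<lambda>k::nat. 2 * int k + 1) ` UNIV \<subseteq> {0..} - S"
    using ev by auto
  have "finite ((\<lambda>k::nat. 2 * int k + 1) ` UNIV)"
    using assms(1) unfolding numerical_semigroup_def using finite_subset[OF sub] by auto
  moreover have "inj (\<lambda>k::nat. 2 * int k + 1)" by (auto simp: inj_def)
  ultimately show False using finite_imageD infinite_UNIV_nat by blast
qed

theorem proposition4p1:
  fixes S :: "int set" and n :: "nat \<Rightarrow> int" and a :: int
  assumes "numerical_semigroup S"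
    and "minimally_generated_by4 S n"
    and "pseudo_symmetric S"
    and "a \<ge> 0"
    and "RF_matrix n (frob S div 2) (special_RF n a)"
  shows "(\<forall>i\<in>{1..4::nat}. odd (n i)) \<longleftrightarrow>
    ((odd (frob S div 2) \<and> (\<forall>i\<in>{1..4::nat}. odd (row_sum (special_RF n a) i))) \<or>
     (even (frob S div 2) \<and> (\<forall>i\<in>{1..4::nat}. even (row_sum (special_RF n a) i))))"
proof -
  define f where "f = frob S div 2"
  define b1 where "b1 = int (alpha n 1) - 1"
  define b2 where "b2 = int (alpha n 2) - 1"
  define b3 where "b3 = int (alpha n 3) - 1"
  define b4 where "b4 = int (alpha n 4) - 1"
  have R: "\<forall>i\<in>{1..4::nat}. f = (\<Sum>j=1..4. special_RF n a i j * n j)"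
    using assms(5) unfolding RF_matrix_def f_def by auto
  have r1: "f = - n 1 + b2 * n 2" using R[rule_format, of 1] unfolding sum14
    by (simp add: sum14 special_RF_def b2_def Let_def)
  have r2: "f = - n 2 + b3 * n 3" using R[rule_format, of 2] unfolding sum14
    by (simp add: sum14 special_RF_def b3_def Let_def)
  have r3: "f = b1 * n 1 - n 3 + b4 * n 4" using R[rule_format, of 3] unfolding sum14
    by (simp add: sum14 special_RF_def b1_def b4_def Let_def)
  have r4: "f = b1 * n 1 + a * n 2 - n 4" using R[rule_format, of 4] unfolding sum14
    by (simp add: sum14 special_RF_def b1_def Let_def)
  have s: "row_sum (special_RF n a) 1 = b2 - 1"
          "row_sum (special_RF n a) 2 = b3 - 1"
          "row_sum (special_RF n a) 3 = b1 + b4 - 1"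
          "row_sum (special_RF n a) 4 = b1 + a - 1"
    unfolding row_sum_def sum14 by (simp_all add:  special_RF_def b1_def b2_def b3_def b4_def Let_def)
  have all4: "\<And>P. (\<forall>i\<in>{1..4::nat}. P i) \<longleftrightarrow> P 1 \<and> P 2 \<and> P 3 \<and> P 4"
    by (auto simp: numeral_eq_Suc) (metis le_Suc_eq le_antisym not_less_eq_eq numeral_2_eq_2 numeral_3_eq_3 One_nat_def)
  have ex: "odd (n 1) \<or> odd (n 2) \<or> odd (n 3) \<or> odd (n 4)"
  proof -
    obtain i where "i \<in> {1..4::nat}" "odd (n i)" using some_odd[OF assms(1,2)] by blast
    moreover have "i = 1 \<or> i = 2 \<or> i = 3 \<or> i = 4" using calculation(1) by auto
    ultimately show ?thesis by auto
  qed
  have e1: "even f \<longleftrightarrow> (even (n 1) \<longleftrightarrow> (even b2 \<or> even (n 2)))"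
    using r1 by simp blast
  have e2: "even f \<longleftrightarrow> (even (n 2) \<longleftrightarrow> (even b3 \<or> even (n 3)))"
    using r2 by simp blast
  have e3: "even f \<longleftrightarrow> ((even b1 \<or> even (n 1)) \<longleftrightarrow> (even (n 3) \<longleftrightarrow> (even b4 \<or> even (n 4))))"
    using r3 by simp blast
  have e4: "even f \<longleftrightarrow> ((even b1 \<or> even (n 1)) \<longleftrightarrow> ((even a \<or> even (n 2)) \<longleftrightarrow> even (n 4)))"
    using r4 by simp blast
  show ?thesis unfolding f_def[symmetric] all4 s
    using e1 e2 e3 e4 ex by simp blast
qed

end
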